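(* Let $G=(V,E)$ be a network and consider a rate-$\omega$ LNEC code over a finite field $\mathbb{F}$ on $G$, as described in the context. Let $t$ be a sink node with $C_t\ge\omega$ and let $r$ be a nonnegative integer with $r\le C_t-\omega$. Then $$\Phi(t)\cap\Delta(t,\xi)=\{0\}\quad\text{for all }\xi\in\mathcal{E}_t(r)$$ if and only if $$\Phi(t)\cap\Delta(t,\xi)=\{0\}\quad\text{for all }\xi\in\mathcal{A}_t(r).$$
   Context: Network: $G=(V,E)$ is a finite directed acyclic graph (parallel edges allowed) with a single source node $s$ and a set of sink nodes $T\subseteq V\setminus\{s\}$; $s$ has no incoming edges and sink nodes have no outgoing edges. For an edge $e$, $\mathrm{tail}(e)$, $\mathrm{head}(e)$ are its tail and head; $\mathrm{In}(v)$, $\mathrm{Out}(v)$ are the incoming/outgoing edge sets of node $v$. A directed path is a sequence of edges $(e_1,\dots,e_m)$, $m\ge1$, with $\mathrm{tail}(e_{k+1})=\mathrm{head}(e_k)$. A cut separating node $v$ from node $u$ is a set of edges whose removal leaves no directed path from $u$ to $v$; $C_t$ is the minimum size of a cut separating sink $t$ from $s$. LNEC code: with rate $\omega\ge1$ and finite field $\mathbb{F}$, introduce imaginary source edges $d_1',\dots,d_\omega'$ ending at $s$ with $\mathrm{In}(s)=\{d_1',\dots,d_\omega'\}$, and for each $e\in E$ an imaginary error edge $e'$ with head $\mathrm{tail}(e)$; $E'=\{e':e\in E\}$ (for non-source nodes, $\mathrm{In}(v)$ contains only edges of $E$). The code is given by local encoding coefficients $k_{d,e}\in\mathbb{F}$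 for $e\in E$, $d\in\mathrm{In}(\mathrm{tail}(e))$. Extended global encoding kernels are vectors in $\mathbb{F}^{\omega+|E|}$ indexed by $\{d_i'\}\cup E'$: $\tilde f_{d_i'}=1_{d_i'}$, $\tilde f_{e'}=1_{e'}$ (standard basis vectors), and recursively in topological order $\tilde f_e=\sum_{d\in\mathrm{In}(\mathrm{tail}(e))}k_{d,e}\tilde f_d+1_{e'}$. For sink $t$, $\mathrm{row}_t(d')=(\tilde f_{\hat e}(d'):\hat e\in\mathrm{In}(t))$. Message space $\Phi(t)=\langle\mathrm{row}_t(d_i'):1\le i\le\omega\rangle$; error space of $\xi\subseteq E$: $\Delta(t,\xi)=\langle\mathrm{row}_t(e'):e\in\xi\rangle$ (spans in $\mathbb{F}^{|\mathrm{In}(t)|}$). Graph notions: for $\xi\subseteq E$ and a node $u$, $A\subseteq E$ is a cut separating $u$ from $\xi$ if every directed path in $G$ whose first edge lies in $\xi$ and whose last edge has head $u$ contains an edge of $A$ (equivalently, $A$ separates $\xi$ from $u$ in the reversed network). $\mathrm{mincut}(\xi,u)$ is the minimum size of such a cut; a cut of that size is a minimum cut separating $u$ from $\xi$. A minimum cut separating $u$ from $\xi$ is primary if it separates $u$ from every minimum cut separating $u$ from $\xi$; it exists and is unique. $\xi$ is primary for $u$ if $\xi$ is the primary minimum cut separating $u$ from $\xi$. For a sink $t$ and integer $r\ge0$: $\mathcal{E}_t(r)=\{\xi\subseteq E:\mathrm{mincut}(\xi,t)\le r\}$ and $\mathcal{A}_t(r)=\{\xi\subseteq E:|\xi|=r,\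 \xi\text{ primary for }t\}$. *)

theory Defs
  imports Main
begin

text \<open>Edges have an abstract type 'e (so parallel edges are allowed); tail and head
  map edges to nodes.  A directed path is a nonempty list of edges of E, consecutive.\<close>

definition is_path :: "'e set \<Rightarrow> ('e \<Rightarrow> 'v) \<Rightarrow> ('e \<Rightarrow> 'v) \<Rightarrow> 'e list \<Rightarrow> bool" where
  "is_path E tail head p \<longleftrightarrow> p \<noteq> [] \<and> set p \<subseteq> E \<and>
     (\<forall>i. Suc i < length p \<longrightarrow> tail (p ! Suc i) = head (p ! i))"

definition network :: "'v set \<Rightarrow> 'e set \<Rightarrow> ('e \<Rightarrow> 'v) \<Rightarrow> ('e \<Rightarrow> 'v) \<Rightarrow> 'v \<Rightarrow> 'v set \<Rightarrow> bool" where
  "network V E tail head s T \<longleftrightarrow>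
     finite V \<and> finite E \<and> (\<forall>e\<in>E. tail e \<in> V \<and> head e \<in> V) \<and>
     s \<in> V \<and> T \<subseteq> V - {s} \<and>
     (\<forall>e\<in>E. head e \<noteq> s) \<and> (\<forall>e\<in>E. tail e \<notin> T) \<and>
     (\<forall>p. is_path E tail head p \<longrightarrow> tail (hd p) \<noteq> head (last p))"

definition In_edges :: "'e set \<Rightarrow> ('e \<Rightarrow> 'v) \<Rightarrow> 'v \<Rightarrow> 'e set" where
  "In_edges E head v = {d \<in> E. head d = v}"

definition node_cut :: "'e set \<Rightarrow> ('e \<Rightarrow> 'v) \<Rightarrow> ('e \<Rightarrow> 'v) \<Rightarrow> 'e set \<Rightarrow> 'v \<Rightarrow> 'v \<Rightarrow> bool" where
  "node_cut E tail head A u v \<longleftrightarrow> A \<subseteq> E \<and>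
     (\<forall>p. is_path E tail head p \<and> tail (hd p) = u \<and> head (last p) = v \<longrightarrow> set p \<inter> A \<noteq> {})"

text \<open>C_t: minimum size of a cut separating t from s.\<close>
definition maxflow :: "'e set \<Rightarrow> ('e \<Rightarrow> 'v) \<Rightarrow> ('e \<Rightarrow> 'v) \<Rightarrow> 'v \<Rightarrow> 'v \<Rightarrow> nat" where
  "maxflow E tail head s t = (LEAST n. \<exists>A. node_cut E tail head A s t \<and> card A = n)"

definition set_cut :: "'e set \<Rightarrow> ('e \<Rightarrow> 'v) \<Rightarrow> ('e \<Rightarrow> 'v) \<Rightarrow> 'e set \<Rightarrow> 'e set \<Rightarrow> 'v \<Rightarrow> bool" where
  "set_cut E tail head A xi u \<longleftrightarrow> A \<subseteq> E \<and>
     (\<forall>p. is_path E tail head p \<and> hd p \<in> xi \<and> head (last p) = u \<longrightarrow> set p \<inter> A \<noteq> {})"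

definition mincut :: "'e set \<Rightarrow> ('e \<Rightarrow> 'v) \<Rightarrow> ('e \<Rightarrow> 'v) \<Rightarrow> 'e set \<Rightarrow> 'v \<Rightarrow> nat" where
  "mincut E tail head xi u = (LEAST n. \<exists>A. set_cut E tail head A xi u \<and> card A = n)"

definition min_set_cut :: "'e set \<Rightarrow> ('e \<Rightarrow> 'v) \<Rightarrow> ('e \<Rightarrow> 'v) \<Rightarrow> 'e set \<Rightarrow> 'e set \<Rightarrow> 'v \<Rightarrow> bool" where
  "min_set_cut E tail head A xi u \<longleftrightarrow>
     set_cut E tail head A xi u \<and> card A = mincut E tail head xi u"

definition primary_cut :: "'e set \<Rightarrow> ('e \<Rightarrow> 'v) \<Rightarrow> ('e \<Rightarrow> 'v) \<Rightarrow> 'e set \<Rightarrow> 'e set \<Rightarrow> 'v \<Rightarrow> bool" where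
  "primary_cut E tail head A xi u \<longleftrightarrow> min_set_cut E tail head A xi u \<and>
     (\<forall>B. min_set_cut E tail head B xi u \<longrightarrow> set_cut E tail head A B u)"

definition is_primary :: "'e set \<Rightarrow> ('e \<Rightarrow> 'v) \<Rightarrow> ('e \<Rightarrow> 'v) \<Rightarrow> 'e set \<Rightarrow> 'v \<Rightarrow> bool" where
  "is_primary E tail head xi u \<longleftrightarrow> primary_cut E tail head xi xi u"

definition calE :: "'e set \<Rightarrow> ('e \<Rightarrow> 'v) \<Rightarrow> ('e \<Rightarrow> 'v) \<Rightarrow> 'v \<Rightarrow> nat \<Rightarrow> 'e set set" where
  "calE E tail head t r = {xi. xi \<subseteq> E \<and> mincut E tail head xi t \<le> r}"

definition calA :: "'e set \<Rightarrow> ('e \<Rightarrow> 'v) \<Rightarrow> ('e \<Rightarrow> 'v) \<Rightarrow> 'v \<Rightarrow> nat \<Rightarrow> 'e set set" where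
  "calA E tail head t r = {xi. xi \<subseteq> E \<and> card xi = r \<and> is_primary E tail head xi t}"

text \<open>Coordinates of extended kernels: Inl i stands for the imaginary source edge d_i'
  (1 \<le> i \<le> omega), Inr e for the imaginary error edge e'.  Local encoding coefficients
  k d e are indexed the same way: d = Inl i is d_i' (only relevant when tail e = s),
  d = Inr d0 is the real edge d0.\<close>

definition In_ext :: "'e set \<Rightarrow> ('e \<Rightarrow> 'v) \<Rightarrow> 'v \<Rightarrow> nat \<Rightarrow> 'v \<Rightarrow> (nat + 'e) set" where
  "In_ext E head s \<omega> v = (if v = s then Inl ` {1..\<omega>} else Inr ` In_edges E head v)"

definition unitv :: "(nat + 'e) \<Rightarrow> (nat + 'e) \<Rightarrow> 'f::field" where
  "unitv a = (\<lambda>x. if x = a then 1 else 0)"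

definition gk_of :: "('e \<Rightarrow> (nat + 'e) \<Rightarrow> 'f::field) \<Rightarrow> (nat + 'e) \<Rightarrow> (nat + 'e) \<Rightarrow> 'f" where
  "gk_of F d = (case d of Inl i \<Rightarrow> unitv (Inl i) | Inr d0 \<Rightarrow> F d0)"

definition kernel_eqns ::
  "'e set \<Rightarrow> ('e \<Rightarrow> 'v) \<Rightarrow> ('e \<Rightarrow> 'v) \<Rightarrow> 'v \<Rightarrow> nat \<Rightarrow> ((nat + 'e) \<Rightarrow> 'e \<Rightarrow> 'f::field)
    \<Rightarrow> ('e \<Rightarrow> (nat + 'e) \<Rightarrow> 'f) \<Rightarrow> bool" where
  "kernel_eqns E tail head s \<omega> k F \<longleftrightarrow>
     (\<forall>e\<in>E. F e = (\<lambda>x. (\<Sum>d\<in>In_ext E head s \<omega> (tail e). k d e * gk_of F d x) + unitv (Inr e) x))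
     \<and> (\<forall>e. e \<notin> E \<longrightarrow> F e = (\<lambda>_. 0))"

text \<open>The extended global encoding kernels f~_e (e in E): the unique solution of the
  recursion (unique since G is acyclic).\<close>
definition ext_kernel ::
  "'e set \<Rightarrow> ('e \<Rightarrow> 'v) \<Rightarrow> ('e \<Rightarrow> 'v) \<Rightarrow> 'v \<Rightarrow> nat \<Rightarrow> ((nat + 'e) \<Rightarrow> 'e \<Rightarrow> 'f::field)
    \<Rightarrow> 'e \<Rightarrow> (nat + 'e) \<Rightarrow> 'f" where
  "ext_kernel E tail head s \<omega> k = (THE F. kernel_eqns E tail head s \<omega> k F)"

definition row ::
  "'e set \<Rightarrow> ('e \<Rightarrow> 'v) \<Rightarrow> ('e \<Rightarrow> 'v) \<Rightarrow> 'v \<Rightarrow> nat \<Rightarrow> ((nat + 'e) \<Rightarrow> 'e \<Rightarrow> 'f::field)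
    \<Rightarrow> 'v \<Rightarrow> (nat + 'e) \<Rightarrow> 'e \<Rightarrow> 'f" where
  "row E tail head s \<omega> k t a =
     (\<lambda>e. if e \<in> In_edges E head t then ext_kernel E tail head s \<omega> k e a else 0)"

definition lin_span :: "'i set \<Rightarrow> ('i \<Rightarrow> 'e \<Rightarrow> 'f::field) \<Rightarrow> ('e \<Rightarrow> 'f) set" where
  "lin_span I g = {(\<lambda>x. \<Sum>i\<in>I. c i * g i x) | c. True}"

definition msg_space ::
  "'e set \<Rightarrow> ('e \<Rightarrow> 'v) \<Rightarrow> ('e \<Rightarrow> 'v) \<Rightarrow> 'v \<Rightarrow> nat \<Rightarrow> ((nat + 'e) \<Rightarrow> 'e \<Rightarrow> 'f::field)
    \<Rightarrow> 'v \<Rightarrow> ('e \<Rightarrow> 'f) set" where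
  "msg_space E tail head s \<omega> k t = lin_span {1..\<omega>} (\<lambda>i. row E tail head s \<omega> k t (Inl i))"

definition err_space ::
  "'e set \<Rightarrow> ('e \<Rightarrow> 'v) \<Rightarrow> ('e \<Rightarrow> 'v) \<Rightarrow> 'v \<Rightarrow> nat \<Rightarrow> ((nat + 'e) \<Rightarrow> 'e \<Rightarrow> 'f::field)
    \<Rightarrow> 'v \<Rightarrow> 'e set \<Rightarrow> ('e \<Rightarrow> 'f) set" where
  "err_space E tail head s \<omega> k t xi = lin_span xi (\<lambda>e. row E tail head s \<omega> k t (Inr e))"

end

theory Submission
  imports Defs
begin


lemma is_path_Cons:
  "is_path E tail head (e # q) \<longleftrightarrow> e \<in> E \<and> (q = [] \<or> is_path E tail head q \<and> tail (hd q) = head e)"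
  unfolding is_path_def
  apply (cases q)
   apply simp
  apply (auto simp: nth_Cons split: nat.splits)
  done

lemma is_path_drop:
  assumes "is_path E tail head p" "i < length p"
  shows "is_path E tail head (drop i p)" "hd (drop i p) = p ! i" "last (drop i p) = last p"
  using assms unfolding is_path_def
  by (auto simp: hd_drop_conv_nth dest: subsetD[OF set_drop_subset])

locale cutg =
  fixes E :: "'e set" and tail head :: "'e \<Rightarrow> 'v" and t :: 'v
  assumes finE: "finite E"
begin

definition blocked :: "'e set \<Rightarrow> 'e \<Rightarrow> bool" where
  "blocked A e \<longleftrightarrow> (\<forall>p. is_path E tail head p \<and> hd p = e \<and> head (last p) = t \<longrightarrow> set p \<inter> A \<noteq> {})"

definition Ub :: "'e set \<Rightarrow> 'e set" where
  "Ub A = {e\<in>E. blocked A e}"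

definition bd :: "'e set \<Rightarrow> 'e set" where
  "bd S = {e\<in>S. head e = t \<or> (\<exists>f\<in>E. tail f = head e \<and> f \<notin> S)}"

lemma set_cut_iff: "set_cut E tail head A X t \<longleftrightarrow> A \<subseteq> E \<and> (\<forall>e\<in>X. blocked A e)"
  unfolding set_cut_def blocked_def by blast

lemma blocked_self: "e \<in> A \<Longrightarrow> blocked A e"
  unfolding blocked_def is_path_def by (metis disjoint_iff hd_in_set)

lemma blocked_trans:
  assumes "\<forall>b\<in>B. blocked A b" "blocked B e"
  shows "blocked A e"
  unfolding blocked_def
proof (intro allI impI)
  fix p assume p: "is_path E tail head p \<and> hd p = e \<and> head (last p) = t"
  then have "set p \<inter> B \<noteq> {}" using assms(2) unfolding blocked_def by blast
  then obtain i where i: "i < length p" "p ! i \<in> B" by (metis disjoint_iff in_set_conv_nth)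
  have "set (drop i p) \<inter> A \<noteq> {}"
    using assms(1) i p is_path_drop[of E tail head p i] unfolding blocked_def by metis
  then show "set p \<inter> A \<noteq> {}" using set_drop_subset[of i p] by blast
qed

lemma bd_blocked:
  assumes "S \<subseteq> E" "e \<in> S"
  shows "blocked (bd S) e"
  unfolding blocked_def
proof (intro allI impI)
  fix p assume p: "is_path E tail head p \<and> hd p = e \<and> head (last p) = t"
  have "\<forall>j. length p - j = n \<longrightarrow> j < length p \<longrightarrow> p ! j \<in> S \<longrightarrow> set p \<inter> bd S \<noteq> {}" for n
  proof (induction n)
    case 0
    then show ?case by auto
  next
    case (Suc n)
    show ?case
    proof (intro allI impI)
      fix j assume j: "length p - j = Suc n" "j < length p" "p ! j \<in> S"
      show "set p \<inter> bd S \<noteq> {}"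
      proof (cases "Suc j = length p")
        case True
        then have "p ! j = last p" by (metis diff_Suc_1 last_conv_nth list.size(3) nat.distinct(1))
        then have "p ! j \<in> bd S" using j p unfolding bd_def by auto
        then show ?thesis using j(2) nth_mem by blast
      next
        case False
        then have sj: "Suc j < length p" using j by auto
        have f: "p ! Suc j \<in> E" "tail (p ! Suc j) = head (p ! j)"
          using p sj unfolding is_path_def by auto
        show ?thesis
        proof (cases "p ! Suc j \<in> S")
          case True
          then show ?thesis using Suc.IH sj j by auto
        next
          case False
          then have "p ! j \<in> bd S" using j f unfolding bd_def by auto
          then show ?thesis using j(2) nth_mem by blast
        qed
      qed
    qed
  qed
  moreover have "p \<noteq> []" using p unfolding is_path_def by auto
  ultimately show "set p \<inter> bd S \<noteq> {}" using p assms(2) by (metis diff_zero hd_conv_nth length_greater_0_conv)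
qed

lemma bd_Ub_sub: "bd (Ub A) \<subseteq> A"
proof
  fix e assume e: "e \<in> bd (Ub A)"
  then have eE: "e \<in> E" and bl: "blocked A e" unfolding bd_def Ub_def by auto
  show "e \<in> A"
  proof (rule ccontr)
    assume nA: "e \<notin> A"
    from e consider "head e = t" | f where "f \<in> E" "tail f = head e" "f \<notin> Ub A"
      unfolding bd_def by auto
    then show False
    proof cases
      case 1
      have "is_path E tail head [e]" using eE unfolding is_path_def by auto
      then show False using bl nA 1 unfolding blocked_def by fastforce
    next
      case 2
      then have "\<not> blocked A f" unfolding Ub_def by auto
      then obtain q where q: "is_path E tail head q" "hd q = f" "head (last q) = t" "set q \<inter> A = {}"
        unfolding blocked_def by blast
      have "q \<noteq> []" using q unfolding is_path_def by auto
      then have "is_path E tail head (e # q)" using q 2 eE is_path_Cons by metis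
      moreover have "set (e # q) \<inter> A = {}" using q nA by auto
      moreover have "head (last (e # q)) = t" using q \<open>q \<noteq> []\<close> by auto
      ultimately have "set (e # q) \<inter> A \<noteq> {}" using bl unfolding blocked_def by (metis list.sel(1))
      then show False using \<open>set (e # q) \<inter> A = {}\<close> by blast
    qed
  qed
qed

lemma bd_sub: "bd S \<subseteq> S" unfolding bd_def by auto

lemma submod:
  assumes "S \<subseteq> E" "T \<subseteq> E"
  shows "card (bd (S \<inter> T)) + card (bd (S \<union> T)) \<le> card (bd S) + card (bd T)"
proof -
  have fin: "finite (bd S)" "finite (bd T)" "finite (bd (S \<inter> T))" "finite (bd (S \<union> T))"
    using assms finE bd_sub by (meson finite_subset le_supI le_infI1)+
  have u: "bd (S \<inter> T) \<union> bd (S \<union> T) \<subseteq> bd S \<union> bd T" unfolding bd_def by auto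
  have i: "bd (S \<inter> T) \<inter> bd (S \<union> T) \<subseteq> bd S \<inter> bd T" unfolding bd_def by auto
  have "card (bd (S \<inter> T)) + card (bd (S \<union> T)) = card (bd (S \<inter> T) \<union> bd (S \<union> T)) + card (bd (S \<inter> T) \<inter> bd (S \<union> T))"
    using card_Un_Int fin by blast
  also have "\<dots> \<le> card (bd S \<union> bd T) + card (bd S \<inter> bd T)"
    using u i fin by (meson add_le_mono card_mono finite_Int finite_UnI)
  also have "\<dots> = card (bd S) + card (bd T)" using card_Un_Int fin by metis
  finally show ?thesis .
qed

lemma cut_E: "set_cut E tail head E X t"
  unfolding set_cut_def is_path_def by (auto simp: Int_absorb2)

lemma mincut_le: "set_cut E tail head A X t \<Longrightarrow> mincut E tail head X t \<le> card A"
  unfolding mincut_def by (rule Least_le) blast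

lemma mincut_ex: "\<exists>A. set_cut E tail head A X t \<and> card A = mincut E tail head X t"
  unfolding mincut_def by (rule LeastI_ex) (use cut_E in blast)

lemma primary_exists:
  assumes XE: "X \<subseteq> E"
  shows "\<exists>P. primary_cut E tail head P X t"
proof -
  define m where "m = mincut E tail head X t"
  define Fam where "Fam = {S. X \<subseteq> S \<and> S \<subseteq> E \<and> card (bd S) = m}"
  have lower: "m \<le> card (bd S)" if "X \<subseteq> S" "S \<subseteq> E" for S
  proof -
    have "set_cut E tail head (bd S) X t"
      unfolding set_cut_iff using that bd_sub bd_blocked by blast
    then show ?thesis unfolding m_def by (rule mincut_le)
  qed
  have UbF: "Ub B \<in> Fam" if "set_cut E tail head B X t" "card B = m" for B
  proof -
    have XU: "X \<subseteq> Ub B" using that XE unfolding set_cut_iff Ub_def by auto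
    have UE: "Ub B \<subseteq> E" unfolding Ub_def by auto
    have "finite B" using that finE unfolding set_cut_def using finite_subset by blast
    then have "card (bd (Ub B)) \<le> m" using bd_Ub_sub[of B] that card_mono by metis
    then show ?thesis using lower[OF XU UE] XU UE unfolding Fam_def by auto
  qed
  obtain A0 where A0: "set_cut E tail head A0 X t" "card A0 = m" using mincut_ex m_def by blast
  have "Ub A0 \<in> Fam" using UbF A0 by blast
  then obtain S where S: "S \<in> Fam" and Smax: "\<forall>S'. S' \<in> Fam \<longrightarrow> card S' \<le> card S"
    using ex_has_greatest_nat[of "\<lambda>S. S \<in> Fam" "Ub A0" card "Suc (card E)"] finE
    unfolding Fam_def by (metis (no_types, lifting) card_mono mem_Collect_eq le_imp_less_Suc)
  have closed: "T \<subseteq> S" if T: "T \<in> Fam" for T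
  proof -
    have "card (bd (S \<inter> T)) + card (bd (S \<union> T)) \<le> m + m"
      using submod[of S T] S T unfolding Fam_def by auto
    moreover have "X \<subseteq> S \<inter> T" "S \<inter> T \<subseteq> E" "X \<subseteq> S \<union> T" "S \<union> T \<subseteq> E"
      using S T unfolding Fam_def by auto
    then have "m \<le> card (bd (S \<inter> T))" "m \<le> card (bd (S \<union> T))"
      using lower by blast+
    ultimately have "S \<union> T \<in> Fam" using S T unfolding Fam_def by auto
    then have "card (S \<union> T) \<le> card S" using Smax by auto
    moreover have "finite (S \<union> T)" using \<open>S \<union> T \<in> Fam\<close> finE unfolding Fam_def using finite_subset by blast
    ultimately have "S \<union> T = S" using card_seteq[of "S \<union> T" S] by blast
    then show ?thesis by blast
  qed
  have SE: "X \<subseteq> S" "S \<subseteq> E" "card (bd S) = m" using S unfolding Fam_def by auto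
  have cutS: "set_cut E tail head (bd S) X t"
    unfolding set_cut_iff using SE bd_sub bd_blocked by blast
  have "primary_cut E tail head (bd S) X t"
    unfolding primary_cut_def min_set_cut_def
  proof (intro conjI allI impI)
    show "set_cut E tail head (bd S) X t" by (rule cutS)
    show "card (bd S) = mincut E tail head X t" using SE m_def by simp
    fix B assume B: "set_cut E tail head B X t \<and> card B = mincut E tail head X t"
    then have "Ub B \<subseteq> S" using UbF closed m_def by blast
    moreover have "B \<subseteq> Ub B" using B blocked_self unfolding Ub_def set_cut_def by auto
    ultimately show "set_cut E tail head (bd S) B t"
      unfolding set_cut_iff using SE bd_sub bd_blocked by blast
  qed
  then show ?thesis by blast
qed

end




lemma is_path_snoc:
  assumes "is_path E tail head p" "y \<in> E" "tail y = head (last p)"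
  shows "is_path E tail head (p @ [y])"
  unfolding is_path_def
proof (intro conjI allI impI)
  show "p @ [y] \<noteq> []" by simp
  show "set (p @ [y]) \<subseteq> E" using assms unfolding is_path_def by auto
  fix i assume i: "Suc i < length (p @ [y])"
  show "tail ((p @ [y]) ! Suc i) = head ((p @ [y]) ! i)"
  proof (cases "Suc i < length p")
    case True
    then show ?thesis using assms(1) unfolding is_path_def by (simp add: nth_append)
  next
    case False
    then have si: "Suc i = length p" using i by simp
    have "p \<noteq> []" using assms(1) unfolding is_path_def by auto
    then have "p ! i = last p" using si by (metis diff_Suc_1 last_conv_nth)
    then show ?thesis using si assms(3) by (simp add: nth_append)
  qed
qed

lemma span_gen: "i \<in> I \<Longrightarrow> finite I \<Longrightarrow> g i \<in> lin_span I g"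
proof -
  assume i: "i \<in> I" "finite I"
  have "g i = (\<lambda>x. \<Sum>j\<in>I. (if j = i then 1 else 0) * g j x)"
  proof
    fix x
    have "(\<Sum>j\<in>I. (if j = i then 1 else 0) * g j x) = (\<Sum>j\<in>I. if j = i then g j x else 0)"
      by (rule sum.cong) auto
    also have "\<dots> = g i x" using i by (simp add: sum.delta')
    finally show "g i x = (\<Sum>j\<in>I. (if j = i then 1 else 0) * g j x)" by simp
  qed
  then show ?thesis unfolding lin_span_def
    by (simp only: mem_Collect_eq) (rule exI[of _ "\<lambda>j. if j = i then 1 else 0"], simp)
qed

lemma span_closed:
  assumes "finite J" "\<forall>j\<in>J. v j \<in> lin_span I g"
  shows "(\<lambda>x. \<Sum>j\<in>J. a j * v j x) \<in> lin_span I g"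
proof -
  have "\<forall>j\<in>J. \<exists>c. v j = (\<lambda>x. \<Sum>i\<in>I. c i * g i x)"
    using assms(2) unfolding lin_span_def by blast
  from bchoice[OF this] obtain c where c: "\<forall>j\<in>J. v j = (\<lambda>x. \<Sum>i\<in>I. c j i * g i x)"
    by blast
  have "(\<lambda>x. \<Sum>j\<in>J. a j * v j x) = (\<lambda>x. \<Sum>i\<in>I. (\<Sum>j\<in>J. a j * c j i) * g i x)"
  proof
    fix x
    have "(\<Sum>j\<in>J. a j * v j x) = (\<Sum>j\<in>J. \<Sum>i\<in>I. a j * c j i * g i x)"
      using c by (simp add: sum_distrib_left mult.assoc)
    also have "\<dots> = (\<Sum>i\<in>I. \<Sum>j\<in>J. a j * c j i * g i x)" by (rule sum.swap)
    also have "\<dots> = (\<Sum>i\<in>I. (\<Sum>j\<in>J. a j * c j i) * g i x)" by (simp add: sum_distrib_right)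
    finally show "(\<Sum>j\<in>J. a j * v j x) = (\<Sum>i\<in>I. (\<Sum>j\<in>J. a j * c j i) * g i x)" .
  qed
  then show ?thesis unfolding lin_span_def
    by (simp only: mem_Collect_eq) (rule exI[of _ "\<lambda>i. \<Sum>j\<in>J. a j * c j i"], simp)
qed

locale lnec = cutg E tail head t
  for E :: "'e set" and tail head :: "'e \<Rightarrow> 'v" and t :: 'v +
  fixes s :: 'v and \<omega> :: nat and k :: "(nat + 'e) \<Rightarrow> 'e \<Rightarrow> 'f::field"
  assumes nohs: "\<forall>e\<in>E. head e \<noteq> s"
    and acyc: "\<forall>p. is_path E tail head p \<longrightarrow> tail (hd p) \<noteq> head (last p)"
begin

definition R :: "('e \<times> 'e) set" where
  "R = {(a, b). a \<in> E \<and> b \<in> E \<and> head a = tail b}"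

lemma R_path: "(a, b) \<in> R\<^sup>+ \<Longrightarrow> \<exists>p. is_path E tail head p \<and> hd p = a \<and> head (last p) = tail b"
proof (induction rule: trancl_induct)
  case (base y)
  then show ?case unfolding R_def is_path_def by (intro exI[of _ "[a]"]) auto
next
  case (step y z)
  then obtain p where p: "is_path E tail head p" "hd p = a" "head (last p) = tail y" by blast
  have yE: "y \<in> E" "head y = tail z" using step unfolding R_def by auto
  have "is_path E tail head (p @ [y])" using is_path_snoc p yE by metis
  moreover have "p \<noteq> []" using p unfolding is_path_def by auto
  ultimately show ?case using p yE by (intro exI[of _ "p @ [y]"]) auto
qed

lemma R_acyclic: "acyclic R"
  unfolding acyclic_def
proof
  fix x show "(x, x) \<notin> R\<^sup>+"
  proof
    assume "(x, x) \<in> R\<^sup>+"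
    then obtain p where "is_path E tail head p" "hd p = x" "head (last p) = tail x" using R_path by blast
    then show False using acyc by auto
  qed
qed

lemma R_fin: "finite R"
proof -
  have "R \<subseteq> E \<times> E" unfolding R_def by auto
  then show ?thesis using finE finite_subset by blast
qed

lemma wfR: "wf R" using finite_acyclic_wf R_fin R_acyclic by blast
lemma wfRc: "wf (R\<inverse>)" using finite_acyclic_wf_converse R_fin R_acyclic by blast

definition Gf :: "('e \<Rightarrow> (nat + 'e) \<Rightarrow> 'f) \<Rightarrow> 'e \<Rightarrow> (nat + 'e) \<Rightarrow> 'f" where
  "Gf f e = (if e \<in> E then (\<lambda>x. (\<Sum>d\<in>In_ext E head s \<omega> (tail e). k d e * gk_of f d x) + unitv (Inr e) x)
             else (\<lambda>_. 0))"

lemma In_ext_Inr: "Inr d0 \<in> In_ext E head s \<omega> (tail e) \<Longrightarrow> e \<in> E \<Longrightarrow> (d0, e) \<in> R"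
  unfolding In_ext_def In_edges_def R_def by (auto split: if_splits)

lemma Gf_cong:
  assumes "\<forall>z. (z, e) \<in> R \<longrightarrow> f z = g z"
  shows "Gf f e = Gf g e"
proof (cases "e \<in> E")
  case True
  have "\<forall>d\<in>In_ext E head s \<omega> (tail e). gk_of f d = gk_of g d"
  proof
    fix d assume d: "d \<in> In_ext E head s \<omega> (tail e)"
    show "gk_of f d = gk_of g d"
    proof (cases d)
      case (Inl i) then show ?thesis unfolding gk_of_def by simp
    next
      case (Inr d0) then show ?thesis unfolding gk_of_def using assms In_ext_Inr d True by auto
    qed
  qed
  then show ?thesis unfolding Gf_def using True by (auto intro!: sum.cong)
qed (simp add: Gf_def)

lemma kernel_ex: "\<exists>F. kernel_eqns E tail head s \<omega> k F"
proof -
  have adm: "adm_wf R Gf" unfolding adm_wf_def using Gf_cong by blast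
  define F where "F = wfrec R Gf"
  have fx: "F = Gf F" unfolding F_def using wfrec_fixpoint[OF wfR adm] .
  have "kernel_eqns E tail head s \<omega> k F"
    unfolding kernel_eqns_def
  proof (intro conjI ballI allI impI)
    fix e assume "e \<in> E" then show "F e = (\<lambda>x. (\<Sum>d\<in>In_ext E head s \<omega> (tail e). k d e * gk_of F d x) + unitv (Inr e) x)"
      by (subst fx) (simp add: Gf_def)
  next
    fix e assume "e \<notin> E" then show "F e = (\<lambda>_. 0)" by (subst fx) (simp add: Gf_def)
  qed
  then show ?thesis by blast
qed

lemma kernel_Gf: "kernel_eqns E tail head s \<omega> k F \<Longrightarrow> F e = Gf F e"
  unfolding kernel_eqns_def Gf_def by auto

lemma kernel_uniq:
  assumes "kernel_eqns E tail head s \<omega> k F1" "kernel_eqns E tail head s \<omega> k F2"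
  shows "F1 = F2"
proof
  fix e show "F1 e = F2 e"
    using wfR
  proof (induction e rule: wf_induct_rule)
    case (less e)
    have "Gf F1 e = Gf F2 e" using Gf_cong less by blast
    then show ?case using kernel_Gf assms by metis
  qed
qed

definition K where "K = ext_kernel E tail head s \<omega> k"

lemma K_eqns: "kernel_eqns E tail head s \<omega> k K"
proof -
  have "\<exists>!F. kernel_eqns E tail head s \<omega> k F" using kernel_ex kernel_uniq by blast
  then show ?thesis unfolding K_def ext_kernel_def by (rule theI')
qed

lemma K_out: "d \<notin> E \<Longrightarrow> K d x = 0"
  using K_eqns unfolding kernel_eqns_def by auto

lemma K_src: "d \<in> E \<Longrightarrow> tail d = s \<Longrightarrow> K d (Inr x) = (if x = d then 1 else 0)"
proof -
  assume d: "d \<in> E" "tail d = s"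
  have "K d (Inr x) = (\<Sum>dd\<in>In_ext E head s \<omega> (tail d). k dd d * gk_of K dd (Inr x)) + unitv (Inr d) (Inr x)"
    using K_eqns d unfolding kernel_eqns_def by auto
  also have "(\<Sum>dd\<in>In_ext E head s \<omega> (tail d). k dd d * gk_of K dd (Inr x)) = 0"
    using d unfolding In_ext_def by (auto intro!: sum.neutral simp: gk_of_def unitv_def)
  finally show ?thesis by (simp add: unitv_def)
qed

lemma K_inner: "d \<in> E \<Longrightarrow> tail d \<noteq> s \<Longrightarrow>
   K d (Inr x) = (\<Sum>d0\<in>In_edges E head (tail d). k (Inr d0) d * K d0 (Inr x)) + (if x = d then 1 else 0)"
proof -
  assume d: "d \<in> E" "tail d \<noteq> s"
  have "K d (Inr x) = (\<Sum>dd\<in>In_ext E head s \<omega> (tail d). k dd d * gk_of K dd (Inr x)) + unitv (Inr d) (Inr x)"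
    using K_eqns d unfolding kernel_eqns_def by auto
  also have "(\<Sum>dd\<in>In_ext E head s \<omega> (tail d). k dd d * gk_of K dd (Inr x))
      = (\<Sum>d0\<in>In_edges E head (tail d). k (Inr d0) d * K d0 (Inr x))"
    using d unfolding In_ext_def by (simp add: sum.reindex gk_of_def)
  finally show ?thesis by (simp add: unitv_def)
qed

definition Out where "Out e = {f \<in> E. tail f = head e}"

lemma fin_In: "finite (In_edges E head v)" unfolding In_edges_def using finE by auto
lemma fin_Out: "finite (Out e)" unfolding Out_def using finE by auto

lemma decomp:
  assumes eE: "e \<in> E"
  shows "K d (Inr e) = (if d = e then 1 else 0) + (\<Sum>f\<in>Out e. k (Inr e) f * K d (Inr f))"
  using wfR
proof (induction d rule: wf_induct_rule)
  case (less d)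
  show ?case
  proof (cases "d \<in> E")
    case False
    then show ?thesis using K_out eE by auto
  next
    case dE: True
    show ?thesis
    proof (cases "tail d = s")
      case True
      have "\<forall>f\<in>Out e. k (Inr e) f * K d (Inr f) = 0"
        using True K_src[OF dE True] nohs eE unfolding Out_def by auto
      then have "(\<Sum>f\<in>Out e. k (Inr e) f * K d (Inr f)) = 0" by (rule sum.neutral)
      then show ?thesis using K_src[OF dE True] by auto
    next
      case ns: False
      let ?I = "In_edges E head (tail d)"
      have IH: "\<forall>d0\<in>?I. K d0 (Inr e) = (if d0 = e then 1 else 0) + (\<Sum>f\<in>Out e. k (Inr e) f * K d0 (Inr f))"
        using less dE unfolding In_edges_def R_def by auto
      have A: "(\<Sum>d0\<in>?I. k (Inr d0) d * (if d0 = e then 1 else 0)) = (\<Sum>f\<in>Out e. k (Inr e) f * (if f = d then 1 else 0))"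
      proof -
        have "(\<Sum>d0\<in>?I. k (Inr d0) d * (if d0 = e then 1 else 0)) = (if e \<in> ?I then k (Inr e) d else 0)"
          using fin_In by (simp add: if_distrib cong: if_cong)
        moreover have "(\<Sum>f\<in>Out e. k (Inr e) f * (if f = d then 1 else 0)) = (if d \<in> Out e then k (Inr e) d else 0)"
          using fin_Out by (simp add: if_distrib cong: if_cong)
        moreover have "e \<in> ?I \<longleftrightarrow> d \<in> Out e" using eE dE unfolding In_edges_def Out_def by auto
        ultimately show ?thesis by simp
      qed
      have "K d (Inr e) = (\<Sum>d0\<in>?I. k (Inr d0) d * K d0 (Inr e)) + (if e = d then 1 else 0)"
        using K_inner[OF dE ns] .
      also have "\<dots> = (\<Sum>d0\<in>?I. k (Inr d0) d * (if d0 = e then 1 else 0))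
          + (\<Sum>d0\<in>?I. \<Sum>f\<in>Out e. k (Inr d0) d * (k (Inr e) f * K d0 (Inr f))) + (if e = d then 1 else 0)"
        using IH by (simp add: distrib_left sum.distrib sum_distrib_left)
      also have "(\<Sum>d0\<in>?I. \<Sum>f\<in>Out e. k (Inr d0) d * (k (Inr e) f * K d0 (Inr f)))
          = (\<Sum>f\<in>Out e. k (Inr e) f * (\<Sum>d0\<in>?I. k (Inr d0) d * K d0 (Inr f)))"
        by (subst sum.swap) (simp add: sum_distrib_left mult.left_commute)
      finally have "K d (Inr e) = (\<Sum>f\<in>Out e. k (Inr e) f * (if f = d then 1 else 0))
          + (\<Sum>f\<in>Out e. k (Inr e) f * (\<Sum>d0\<in>?I. k (Inr d0) d * K d0 (Inr f))) + (if e = d then 1 else 0)"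
        using A by simp
      also have "\<dots> = (if d = e then 1 else 0) + (\<Sum>f\<in>Out e. k (Inr e) f * K d (Inr f))"
        using K_inner[OF dE ns] by (simp add: sum.distrib distrib_left add.commute eq_commute)
      finally show ?thesis .
    qed
  qed
qed

definition rowv where "rowv x = row E tail head s \<omega> k t (Inr x)"

lemma rowv_alt: "rowv x = (\<lambda>d. if d \<in> In_edges E head t then K d (Inr x) else 0)"
  unfolding rowv_def row_def K_def by simp

lemma row_span:
  assumes "e \<in> E"
  shows "\<forall>A. A \<subseteq> E \<longrightarrow> blocked A e \<longrightarrow> rowv e \<in> lin_span A rowv"
  using wfRc assms
proof (induction e rule: wf_induct_rule)
  case (less e)
  show ?case
  proof (intro allI impI)
    fix A assume A: "A \<subseteq> E" "blocked A e"
    have finA: "finite A" using A finE finite_subset by blast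
    show "rowv e \<in> lin_span A rowv"
    proof (cases "e \<in> A")
      case True
      then show ?thesis using span_gen finA by metis
    next
      case nA: False
      have pe: "is_path E tail head [e]" using less.prems unfolding is_path_def by auto
      have ht: "head e \<noteq> t"
      proof
        assume "head e = t"
        then have "set [e] \<inter> A \<noteq> {}" using A(2)[unfolded blocked_def, rule_format, of "[e]"] pe by simp
        then show False using nA by simp
      qed
      have fb: "\<forall>f\<in>Out e. rowv f \<in> lin_span A rowv"
      proof
        fix f assume f: "f \<in> Out e"
        have blf: "blocked A f"
        proof (rule ccontr)
          assume "\<not> blocked A f"
          then obtain q where q: "is_path E tail head q" "hd q = f" "head (last q) = t" "set q \<inter> A = {}"
            unfolding blocked_def by blast
          have "q \<noteq> []" using q unfolding is_path_def by auto
          then have "is_path E tail head (e # q)"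
            using is_path_Cons[of E tail head e q] q(1,2) f less.prems unfolding Out_def by auto
          moreover have "set (e # q) \<inter> A = {}" using q nA by auto
          moreover have "head (last (e # q)) = t" using q \<open>q \<noteq> []\<close> by auto
          ultimately have "set (e # q) \<inter> A \<noteq> {}" using A(2)[unfolded blocked_def, rule_format, of "e # q"] by simp
          then show False using \<open>set (e # q) \<inter> A = {}\<close> by blast
        qed
        have "(f, e) \<in> R\<inverse>" using f less.prems unfolding Out_def R_def by auto
        moreover have "f \<in> E" using f unfolding Out_def by auto
        ultimately show "rowv f \<in> lin_span A rowv" using less.IH A(1) blf by blast
      qed
      have "rowv e = (\<lambda>x. \<Sum>f\<in>Out e. k (Inr e) f * rowv f x)"
      proof
        fix d
        show "rowv e d = (\<Sum>f\<in>Out e. k (Inr e) f * rowv f d)"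
        proof (cases "d \<in> In_edges E head t")
          case True
          then have "d \<noteq> e" using ht unfolding In_edges_def by auto
          then show ?thesis using True decomp[OF less.prems] unfolding rowv_alt by simp
        next
          case False
          then show ?thesis unfolding rowv_alt by simp
        qed
      qed
      then show ?thesis using span_closed[OF fin_Out fb] by metis
    qed
  qed
qed

lemma err_sub:
  assumes "X \<subseteq> E" "set_cut E tail head A X t"
  shows "err_space E tail head s \<omega> k t X \<subseteq> err_space E tail head s \<omega> k t A"
proof
  fix v assume "v \<in> err_space E tail head s \<omega> k t X"
  then obtain c where v: "v = (\<lambda>x. \<Sum>e\<in>X. c e * rowv e x)"
    unfolding err_space_def lin_span_def rowv_def by blast
  have "\<forall>e\<in>X. rowv e \<in> lin_span A rowv"
    using row_span assms unfolding set_cut_iff by blast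
  moreover have "finite X" using assms finE finite_subset by blast
  ultimately have "v \<in> lin_span A rowv" using span_closed v by blast
  then show "v \<in> err_space E tail head s \<omega> k t A" unfolding err_space_def rowv_def by simp
qed

end



lemma ivt_nat:
  fixes f :: "nat \<Rightarrow> nat"
  assumes "f 0 \<le> r" "r \<le> f N" "\<forall>n. f (Suc n) \<le> Suc (f n)"
  shows "\<exists>n. f n = r"
  using assms(2)
proof (induction N)
  case 0 then show ?case using assms(1) by (intro exI[of _ 0]) simp
next
  case (Suc N)
  show ?case
  proof (cases "r \<le> f N")
    case True then show ?thesis using Suc.IH by blast
  next
    case False
    then have "f (Suc N) = r" using Suc.prems assms(3)[rule_format, of N] by simp
    then show ?thesis by blast
  qed
qed

context cutg
begin

lemma blocked_mono: "A \<subseteq> B \<Longrightarrow> blocked A e \<Longrightarrow> blocked B e"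
  unfolding blocked_def by blast

lemma mincut_insert:
  assumes "a \<in> E"
  shows "mincut E tail head (insert a Y) t \<le> Suc (mincut E tail head Y t)"
proof -
  obtain C where C: "set_cut E tail head C Y t" "card C = mincut E tail head Y t" using mincut_ex by blast
  have "set_cut E tail head (insert a C) (insert a Y) t"
    using C(1) assms blocked_self blocked_mono[of C "insert a C"] unfolding set_cut_iff by blast
  then have "mincut E tail head (insert a Y) t \<le> card (insert a C)" by (rule mincut_le)
  also have "\<dots> \<le> Suc (card C)" by (simp add: card_insert_le_m1 card_insert_if)
  finally show ?thesis using C(2) by simp
qed

lemma mincut_In:
  "card (In_edges E head t) \<le> mincut E tail head (X \<union> In_edges E head t) t"
proof -
  obtain C where C: "set_cut E tail head C (X \<union> In_edges E head t) t" "card C = mincut E tail head (X \<union> In_edges E head t) t"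
    using mincut_ex by blast
  have "In_edges E head t \<subseteq> C"
  proof
    fix e assume e: "e \<in> In_edges E head t"
    then have "is_path E tail head [e]" unfolding is_path_def In_edges_def by auto
    moreover have "blocked C e" using C(1) e unfolding set_cut_iff by auto
    ultimately have "set [e] \<inter> C \<noteq> {}" using e unfolding blocked_def In_edges_def by auto
    then show "e \<in> C" by simp
  qed
  moreover have "finite C" using C(1) finE unfolding set_cut_def using finite_subset by blast
  ultimately show ?thesis using C(2) card_mono by metis
qed

lemma grow:
  assumes "X \<subseteq> E" "mincut E tail head X t \<le> r" "r \<le> card (In_edges E head t)"
  shows "\<exists>X'. X \<subseteq> X' \<and> X' \<subseteq> E \<and> mincut E tail head X' t = r"
proof -
  have "finite (In_edges E head t)" unfolding In_edges_def using finE by auto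
  then obtain L where L: "set L = In_edges E head t" using finite_list by blast
  define f where "f n = mincut E tail head (X \<union> set (take n L)) t" for n
  have "f 0 \<le> r" using assms(2) unfolding f_def by simp
  moreover have "r \<le> f (length L)" using assms(3) mincut_In[of X] L unfolding f_def by simp
  moreover have "\<forall>n. f (Suc n) \<le> Suc (f n)"
  proof
    fix n show "f (Suc n) \<le> Suc (f n)"
    proof (cases "n < length L")
      case True
      then have "X \<union> set (take (Suc n) L) = insert (L ! n) (X \<union> set (take n L))"
        by (auto simp: take_Suc_conv_app_nth)
      moreover have "L ! n \<in> E" using True L nth_mem unfolding In_edges_def by force
      ultimately show ?thesis unfolding f_def using mincut_insert by metis
    next
      case False then show ?thesis unfolding f_def by simp
    qed
  qed
  ultimately obtain n where "f n = r" using ivt_nat by metis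
  moreover have "X \<union> set (take n L) \<subseteq> E" using assms(1) L set_take_subset[of n L] unfolding In_edges_def by auto
  ultimately show ?thesis unfolding f_def by blast
qed

lemma primary_props:
  assumes XE: "X \<subseteq> E" and P: "primary_cut E tail head P X t"
  shows "is_primary E tail head P t" "card P = mincut E tail head X t" "set_cut E tail head P X t" "P \<subseteq> E"
proof -
  show cP: "card P = mincut E tail head X t" and sP: "set_cut E tail head P X t"
    using P unfolding primary_cut_def min_set_cut_def by auto
  show PE: "P \<subseteq> E" using sP unfolding set_cut_def by auto
  have trans: "set_cut E tail head C X t" if "set_cut E tail head C P t" for C
    using that sP blocked_trans unfolding set_cut_iff by blast
  have sPP: "set_cut E tail head P P t" using PE blocked_self unfolding set_cut_iff by auto
  have mP: "mincut E tail head P t = card P"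
  proof -
    obtain C where C: "set_cut E tail head C P t" "card C = mincut E tail head P t" using mincut_ex by blast
    have "mincut E tail head X t \<le> card C" using trans[OF C(1)] by (rule mincut_le)
    moreover have "mincut E tail head P t \<le> card P" using sPP by (rule mincut_le)
    ultimately show ?thesis using C(2) cP by simp
  qed
  show "is_primary E tail head P t"
    unfolding is_primary_def primary_cut_def
  proof (intro conjI allI impI)
    show "min_set_cut E tail head P P t" unfolding min_set_cut_def using sPP mP by simp
    fix B assume B: "min_set_cut E tail head B P t"
    then have "min_set_cut E tail head B X t" using trans mP cP unfolding min_set_cut_def by simp
    then show "set_cut E tail head P B t" using P unfolding primary_cut_def by blast
  qed
qed

end

lemma maxflow_le_In:
  assumes "finite E"
  shows "maxflow E tail head s t \<le> card (In_edges E head t)"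
proof -
  have "node_cut E tail head (In_edges E head t) s t"
    unfolding node_cut_def
  proof (intro conjI allI impI)
    show "In_edges E head t \<subseteq> E" unfolding In_edges_def by auto
    fix p assume p: "is_path E tail head p \<and> tail (hd p) = s \<and> head (last p) = t"
    then have "last p \<in> set p" "set p \<subseteq> E" unfolding is_path_def by auto
    then have "last p \<in> set p \<inter> In_edges E head t" using p unfolding In_edges_def by auto
    then show "set p \<inter> In_edges E head t \<noteq> {}" by blast
  qed
  then show ?thesis unfolding maxflow_def by (intro Least_le) blast
qed

lemma zero_span: "(\<lambda>_. 0) \<in> lin_span I g"
  unfolding lin_span_def by (simp only: mem_Collect_eq) (rule exI[of _ "\<lambda>_. 0"], simp)

theorem theorem8:
  fixes V :: "'v set" and E :: "'e set" and tail head :: "'e \<Rightarrow> 'v"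
    and s :: 'v and T :: "'v set" and \<omega> :: nat
    and k :: "(nat + 'e) \<Rightarrow> 'e \<Rightarrow> 'f::{field,finite}"
    and t :: 'v and r :: nat
  assumes "network V E tail head s T"
    and "\<omega> \<ge> 1"
    and "t \<in> T"
    and "maxflow E tail head s t \<ge> \<omega>"
    and "r \<le> maxflow E tail head s t - \<omega>"
  shows "(\<forall>xi\<in>calE E tail head t r.
            msg_space E tail head s \<omega> k t \<inter> err_space E tail head s \<omega> k t xi = {\<lambda>_. 0})
     \<longleftrightarrow> (\<forall>xi\<in>calA E tail head t r.
            msg_space E tail head s \<omega> k t \<inter> err_space E tail head s \<omega> k t xi = {\<lambda>_. 0})"
proof -
  have net: "finite E" "\<forall>e\<in>E. head e \<noteq> s" "\<forall>p. is_path E tail head p \<longrightarrow> tail (hd p) \<noteq> head (last p)"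
    using assms(1) unfolding network_def by auto
  interpret L: lnec E tail head t s \<omega> k
    by unfold_locales (use net in auto)
  have rIn: "r \<le> card (In_edges E head t)" using maxflow_le_In[OF net(1), where tail = tail and head = head and s = s and t = t] assms(5) by linarith
  have AE: "calA E tail head t r \<subseteq> calE E tail head t r"
  proof
    fix xi assume "xi \<in> calA E tail head t r"
    then show "xi \<in> calE E tail head t r"
      unfolding calA_def calE_def is_primary_def primary_cut_def min_set_cut_def by auto
  qed
  show ?thesis
  proof
    assume "\<forall>xi\<in>calE E tail head t r.
            msg_space E tail head s \<omega> k t \<inter> err_space E tail head s \<omega> k t xi = {\<lambda>_. 0}"
    then show "\<forall>xi\<in>calA E tail head t r.
            msg_space E tail head s \<omega> k t \<inter> err_space E tail head s \<omega> k t xi = {\<lambda>_. 0}"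
      using AE by blast
  next
    assume H: "\<forall>xi\<in>calA E tail head t r.
            msg_space E tail head s \<omega> k t \<inter> err_space E tail head s \<omega> k t xi = {\<lambda>_. 0}"
    show "\<forall>xi\<in>calE E tail head t r.
            msg_space E tail head s \<omega> k t \<inter> err_space E tail head s \<omega> k t xi = {\<lambda>_. 0}"
    proof
      fix xi assume xi: "xi \<in> calE E tail head t r"
      then have xiE: "xi \<subseteq> E" and xm: "mincut E tail head xi t \<le> r" unfolding calE_def by auto
      obtain X' where X': "xi \<subseteq> X'" "X' \<subseteq> E" "mincut E tail head X' t = r"
        using L.grow[OF xiE xm rIn] by blast
      obtain P where P: "primary_cut E tail head P X' t" using L.primary_exists[OF X'(2)] by blast
      note pp = L.primary_props[OF X'(2) P]
      have PA: "P \<in> calA E tail head t r" unfolding calA_def using pp X'(3) by auto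
      have "set_cut E tail head P xi t" using pp(3) X'(1) unfolding set_cut_def by blast
      then have "err_space E tail head s \<omega> k t xi \<subseteq> err_space E tail head s \<omega> k t P"
        using L.err_sub[OF xiE] by blast
      then have sub: "msg_space E tail head s \<omega> k t \<inter> err_space E tail head s \<omega> k t xi \<subseteq> {\<lambda>_. 0}"
        using H PA by blast
      have "(\<lambda>_. 0) \<in> msg_space E tail head s \<omega> k t \<inter> err_space E tail head s \<omega> k t xi"
        unfolding msg_space_def err_space_def by (intro IntI zero_span)
      then show "msg_space E tail head s \<omega> k t \<inter> err_space E tail head s \<omega> k t xi = {\<lambda>_. 0}"
        using sub by blast
    qed
  qed
qed

end
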